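(* Let $\mathbb F$ be a finitely generated free group with symmetric free generating set $S$, let $\mathcal G=(V,E)$ be a constraint graph with $V$ and $E$ finite, and let $X=X_{\mathcal G}\subset V^{\mathbb F}$ be the graph subshift determined by $\mathcal G$. If there exists a shift-invariant Borel probability measure $\mu$ on $X$, then there exists a periodic treequence $x\in X$. Moreover, if for some $v\in V$ one has $\mu(\{x\in X: x(\mathrm{id})=v\})>0$, then there exists a periodic treequence $x\in X$ with $x(\mathrm{id})=v$.
   Context: $S=B\cup B^{-1}$ for a free basis $B$ of $\mathbb F$; $\mathrm{id}$ is the identity of $\mathbb F$. A constraint graph is a pair $\mathcal G=(V,E)$ with $E\subset V\times V\times S$; a triple $(v,w;s)\in E$ is a directed edge from $v$ to $w$ labeled $s$. Elements of $V^{\mathbb F}$ (functions $\mathbb F\to V$) are called treequences; $V^{\mathbb F}$ carries the product topology ($V$ discrete). The graph subshift $X_{\mathcal G}$ is the set of $x\in V^{\mathbb F}$ such that $(x(f),x(fs);s)\in E$ for all $f\in\mathbb F$, $s\in S$. $\mathbb F$ acts by shifts $(\sigma_gx)(f)=x(g^{-1}f)$; a measure $\mu$ is shift-invariant if $\mu(\sigma_gA)=\mu(A)$ for all $g$ and Borel $A$. A treequence $x$ is periodic if $\{f\in\mathbb F:\sigma_fx=x\}$ has finite index in $\mathbb F$. *)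

theory Defs
  imports "HOL-Probability.Probability"
begin

text \<open>A letter (b, True) stands for the basis element b, (b, False) for its inverse.
  The symmetric generating set S = B \<union> B^-1 is thus the type 'b \<times> bool.\<close>

definition letter_inv :: "'b \<times> bool \<Rightarrow> 'b \<times> bool" where
  "letter_inv l = (fst l, \<not> snd l)"

fun reduced :: "('b \<times> bool) list \<Rightarrow> bool" where
  "reduced [] = True"
| "reduced [_] = True"
| "reduced (a # b # w) = (b \<noteq> letter_inv a \<and> reduced (b # w))"

typedef 'b fgrp = "{w :: ('b \<times> bool) list. reduced w}"
  by (rule exI[of _ "[]"]) simp

fun cons_red :: "'b \<times> bool \<Rightarrow> ('b \<times> bool) list \<Rightarrow> ('b \<times> bool) list" where
  "cons_red a [] = [a]"
| "cons_red a (b # w) = (if b = letter_inv a then w else a # b # w)"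

definition fmul :: "'b fgrp \<Rightarrow> 'b fgrp \<Rightarrow> 'b fgrp" where
  "fmul u v = Abs_fgrp (foldr cons_red (Rep_fgrp u) (Rep_fgrp v))"

definition fone :: "'b fgrp" where
  "fone = Abs_fgrp []"

definition finv :: "'b fgrp \<Rightarrow> 'b fgrp" where
  "finv u = Abs_fgrp (rev (map letter_inv (Rep_fgrp u)))"

definition gen :: "'b \<times> bool \<Rightarrow> 'b fgrp" where
  "gen s = Abs_fgrp [s]"

text \<open>A constraint graph with vertex type 'v (finite) has edge set
  E \<subseteq> V \<times> V \<times> S; an edge (v, w, s) goes from v to w with label s.\<close>

definition graph_subshift :: "('v \<times> 'v \<times> ('b \<times> bool)) set \<Rightarrow> ('b fgrp \<Rightarrow> 'v) set" where
  "graph_subshift E = {x. \<forall>f s. (x f, x (fmul f (gen s)), s) \<in> E}"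

definition shift :: "'b fgrp \<Rightarrow> ('b fgrp \<Rightarrow> 'v) \<Rightarrow> ('b fgrp \<Rightarrow> 'v)" where
  "shift g x = (\<lambda>f. x (fmul (finv g) f))"

definition finite_index :: "'b fgrp set \<Rightarrow> bool" where
  "finite_index H = finite ((\<lambda>a. (\<lambda>h. fmul a h) ` H) ` UNIV)"

definition periodic :: "('b fgrp \<Rightarrow> 'v) \<Rightarrow> bool" where
  "periodic x = finite_index {f. shift f x = x}"

text \<open>The Borel sigma-algebra of the full shift V^F (V finite discrete, F countable)
  coincides with the product sigma-algebra.\<close>
definition full_shift_measure :: "('b fgrp \<Rightarrow> 'v) measure" where
  "full_shift_measure = Pi\<^sub>M UNIV (\<lambda>_. count_space UNIV)"

end

theory Submission
  imports Defs
begin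

lemma letter_inv_inv[simp]: "letter_inv (letter_inv a) = a"
  by (simp add: letter_inv_def)

lemma letter_inv_neq[simp]: "letter_inv a \<noteq> a"
  by (cases a) (simp add: letter_inv_def)

lemma reduced_tl: "reduced (a # w) \<Longrightarrow> reduced w"
  by (cases w) auto

lemma reduced_cons_red: "reduced w \<Longrightarrow> reduced (cons_red a w)"
  by (cases w) (auto dest: reduced_tl)

lemma reduced_foldr: "reduced w \<Longrightarrow> reduced (foldr cons_red u w)"
  by (induction u) (auto intro: reduced_cons_red)

lemma Rep_fmul: "Rep_fgrp (fmul u v) = foldr cons_red (Rep_fgrp u) (Rep_fgrp v)"
  unfolding fmul_def
  by (rule Abs_fgrp_inverse) (simp add: reduced_foldr Rep_fgrp[simplified])

lemma cancel: "reduced w \<Longrightarrow> cons_red a (cons_red (letter_inv a) w) = w"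
proof (cases w)
  case (Cons b w')
  assume r: "reduced w"
  show ?thesis
  proof (cases "b = a")
    case True
    then show ?thesis using r Cons by (cases w') auto
  qed (use Cons in auto)
qed simp

lemma cons_red_foldr: "reduced w \<Longrightarrow> foldr cons_red (cons_red a v) w = cons_red a (foldr cons_red v w)"
proof (cases v)
  case (Cons b v')
  assume r: "reduced w"
  show ?thesis
  proof (cases "b = letter_inv a")
    case True
    then show ?thesis using Cons cancel[OF reduced_foldr[OF r], of a v'] by simp
  qed (use Cons in auto)
qed simp

lemma foldr_assoc: "reduced w \<Longrightarrow> foldr cons_red (foldr cons_red u v) w = foldr cons_red u (foldr cons_red v w)"
  by (induction u) (auto simp: cons_red_foldr)

lemma fmul_assoc: "fmul (fmul u v) w = fmul u (fmul v w)"
  by (simp add: fmul_def Rep_fmul[unfolded fmul_def] foldr_assoc Rep_fgrp[simplified])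

definition rmi :: "('b \<times> bool) list \<Rightarrow> ('b \<times> bool) list" where
  "rmi w = rev (map letter_inv w)"

lemma rmi_rmi[simp]: "rmi (rmi w) = w"
  by (simp add: rmi_def rev_map comp_def)

lemma rmi_Cons: "rmi (a # w) = rmi w @ [letter_inv a]"
  by (simp add: rmi_def)

lemma reduced_snoc: "reduced (w @ [a]) \<longleftrightarrow> reduced w \<and> (w \<noteq> [] \<longrightarrow> a \<noteq> letter_inv (last w))"
  by (induction w rule: reduced.induct) auto

lemma last_rmi: "w \<noteq> [] \<Longrightarrow> last (rmi w) = letter_inv (hd w)"
  by (cases w) (auto simp: rmi_def)

lemma reduced_rmi: "reduced w \<Longrightarrow> reduced (rmi w)"
proof (induction w)
  case (Cons a w)
  have "reduced w" using Cons.prems by (rule reduced_tl)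
  moreover have "w \<noteq> [] \<Longrightarrow> hd w \<noteq> letter_inv a" using Cons.prems by (cases w) auto
  ultimately show ?case using Cons.IH
    by (auto simp: rmi_Cons reduced_snoc last_rmi) (simp add: rmi_def)
qed (simp add: rmi_def)

lemma Rep_finv: "Rep_fgrp (finv u) = rmi (Rep_fgrp u)"
  unfolding finv_def rmi_def[symmetric]
  by (rule Abs_fgrp_inverse) (simp add: reduced_rmi Rep_fgrp[simplified])

lemma foldr_rmi: "reduced k \<Longrightarrow> foldr cons_red u (foldr cons_red (rmi u) k) = k"
proof (induction u arbitrary: k)
  case (Cons a u)
  have "foldr cons_red (a # u) (foldr cons_red (rmi (a # u)) k)
      = cons_red a (foldr cons_red u (foldr cons_red (rmi u) (cons_red (letter_inv a) k)))"
    by (simp add: rmi_Cons)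
  also have "\<dots> = cons_red a (cons_red (letter_inv a) k)"
    using Cons by (simp add: reduced_cons_red)
  also have "\<dots> = k" using Cons.prems by (rule cancel)
  finally show ?case .
qed (simp add: rmi_def)

lemma fmul_finv_cancel: "fmul g (fmul (finv g) k) = k"
  by (simp add: Rep_fgrp_inject[symmetric] Rep_fmul Rep_finv foldr_rmi Rep_fgrp[simplified])

lemma finv_finv[simp]: "finv (finv g) = g"
  unfolding finv_def rmi_def[symmetric]
  by (simp add: Rep_finv[unfolded finv_def rmi_def[symmetric]] Rep_fgrp_inverse)

lemma fmul_finv_cancel2: "fmul (finv g) (fmul g k) = k"
  using fmul_finv_cancel[of "finv g" k] by simp

lemma Rep_fone[simp]: "Rep_fgrp fone = []"
  unfolding fone_def by (rule Abs_fgrp_inverse) simp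

lemma Rep_gen[simp]: "Rep_fgrp (gen s) = [s]"
  unfolding gen_def by (rule Abs_fgrp_inverse) simp

lemma fmul_fone_left[simp]: "fmul fone g = g"
  by (simp add: fmul_def Rep_fgrp_inverse)

lemma foldr_nil: "reduced w \<Longrightarrow> foldr cons_red w [] = w"
proof (induction w)
  case (Cons a w)
  then show ?case using reduced_tl[OF Cons.prems] by (cases w) auto
qed simp

lemma fmul_fone_right[simp]: "fmul g fone = g"
  by (simp add: fmul_def foldr_nil Rep_fgrp[simplified] Rep_fgrp_inverse)

lemma gen_inv: "fmul (gen s) (gen (letter_inv s)) = fone"
  by (simp add: fmul_def fone_def)

lemma shift_apply: "shift g x f = x (fmul (finv g) f)"
  by (simp add: shift_def)

lemma shift_X: "x \<in> graph_subshift E \<Longrightarrow> shift g x \<in> graph_subshift E"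
  by (simp add: graph_subshift_def shift_def fmul_assoc[symmetric])

lemma shift_shift_inv: "shift g (shift (finv g) x) = x"
  by (simp add: shift_def fmul_finv_cancel)


lemma sum_split_k:
  assumes "finite I" "k \<in> I"
  shows "(\<Sum>i\<in>I. f i) = f k + (\<Sum>i\<in>I - {k}. f i)"
  using assms by (simp add: sum.remove)

lemma rat_approx:
  assumes "finite I" "finite Eq" "\<forall>c\<in>Eq. \<forall>i\<in>I. c i \<in> \<rat>"
    "\<forall>c\<in>Eq. (\<Sum>i\<in>I. c i * x i) = (0::real)" "\<epsilon> > 0"
  shows "\<exists>y. (\<forall>i\<in>I. y i \<in> \<rat>) \<and> (\<forall>c\<in>Eq. (\<Sum>i\<in>I. c i * y i) = 0) \<and> (\<forall>i\<in>I. \<bar>x i - y i\<bar> < \<epsilon>)"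
  using assms
proof (induction "card I" arbitrary: I Eq x \<epsilon> rule: less_induct)
  case less
  show ?case
  proof (cases "\<exists>c\<in>Eq. \<exists>k\<in>I. c k \<noteq> 0")
    case False
    have "\<forall>i. \<exists>r. i \<in> I \<longrightarrow> r \<in> \<rat> \<and> \<bar>x i - r\<bar> < \<epsilon>"
    proof
      fix i
      obtain r where "r \<in> \<rat>" "x i < r" "r < x i + \<epsilon>"
        using Rats_dense_in_real[of "x i" "x i + \<epsilon>"] less.prems(5) by auto
      then show "\<exists>r. i \<in> I \<longrightarrow> r \<in> \<rat> \<and> \<bar>x i - r\<bar> < \<epsilon>" by (intro exI[of _ r]) auto
    qed
    then obtain y where y: "\<forall>i. i \<in> I \<longrightarrow> y i \<in> \<rat> \<and> \<bar>x i - y i\<bar> < \<epsilon>"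
      by (rule choice[THEN exE])
    show ?thesis
      by (rule exI[of _ y]) (use y False in auto)
  next
    case True
    then obtain c k where ck: "c \<in> Eq" "k \<in> I" "c k \<noteq> 0" by blast
    define I' where "I' = I - {k}"
    define Eq' where "Eq' = (\<lambda>d i. d i - d k * c i / c k) ` Eq"
    define C where "C = (\<Sum>i\<in>I'. \<bar>c i\<bar>)"
    have C0: "C \<ge> 0" unfolding C_def by (simp add: sum_nonneg)
    define \<delta> where "\<delta> = min \<epsilon> (\<epsilon> * \<bar>c k\<bar> / (1 + C))"
    have \<delta>0: "\<delta> > 0" unfolding \<delta>_def using less.prems(5) ck(3) C0 by auto
    have cardI': "card I' < card I" unfolding I'_def using less.prems(1) ck(2)
      by (intro card_Diff1_less)
    have finI': "finite I'" unfolding I'_def using less.prems(1) by simp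
    have eqsplit: "\<And>d z. (\<Sum>i\<in>I. d i * z i) = d k * z k + (\<Sum>i\<in>I'. d i * z i)"
      unfolding I'_def using less.prems(1) ck(2) by (rule sum_split_k)
    have Eq'rat: "\<forall>d\<in>Eq'. \<forall>i\<in>I'. d i \<in> \<rat>"
    proof (intro ballI)
      fix d' i assume "d' \<in> Eq'" "i \<in> I'"
      then obtain d where d: "d \<in> Eq" "d' = (\<lambda>i. d i - d k * c i / c k)" unfolding Eq'_def by auto
      have "i \<in> I" using \<open>i \<in> I'\<close> unfolding I'_def by auto
      then show "d' i \<in> \<rat>" using d less.prems(3) ck
        by (auto intro!: Rats_diff Rats_mult Rats_divide)
    qed
    have key: "(\<Sum>i\<in>I'. (d i - d k * c i / c k) * z i) = (\<Sum>i\<in>I'. d i * z i) - d k / c k * (\<Sum>i\<in>I'. c i * z i)"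
      for d z :: "_ \<Rightarrow> real"
      by (simp add: algebra_simps sum_subtractf sum_distrib_left)
    have Eq'x: "\<forall>d\<in>Eq'. (\<Sum>i\<in>I'. d i * x i) = 0"
    proof
      fix d' assume "d' \<in> Eq'"
      then obtain d where d: "d \<in> Eq" "d' = (\<lambda>i. d i - d k * c i / c k)" unfolding Eq'_def by auto
      have "(\<Sum>i\<in>I. d i * x i) = 0" using less.prems(4) d(1) by blast
      then have e1: "(\<Sum>i\<in>I'. d i * x i) = - (d k * x k)" using eqsplit[of d x] by linarith
      have "(\<Sum>i\<in>I. c i * x i) = 0" using less.prems(4) ck(1) by blast
      then have e2: "(\<Sum>i\<in>I'. c i * x i) = - (c k * x k)" using eqsplit[of c x] by linarith
      have "(\<Sum>i\<in>I'. d' i * x i) = (\<Sum>i\<in>I'. d i * x i) - d k / c k * (\<Sum>i\<in>I'. c i * x i)"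
        using key d(2) by simp
      also have "\<dots> = - (d k * x k) - d k / c k * (- (c k * x k))" unfolding e1 e2 ..
      also have "\<dots> = 0" using ck(3) by simp
      finally show "(\<Sum>i\<in>I'. d' i * x i) = 0" .
    qed
    have finEq': "finite Eq'" unfolding Eq'_def using less.prems(2) by simp
    obtain y' where y': "\<forall>i\<in>I'. y' i \<in> \<rat>" "\<forall>d\<in>Eq'. (\<Sum>i\<in>I'. d i * y' i) = 0"
      "\<forall>i\<in>I'. \<bar>x i - y' i\<bar> < \<delta>"
      using less.hyps[OF cardI' finI' finEq' Eq'rat Eq'x \<delta>0] by blast
    define y where "y = y'(k := - (\<Sum>i\<in>I'. c i * y' i) / c k)"
    have kI': "k \<notin> I'" unfolding I'_def by simp
    have sumy: "\<And>d. (\<Sum>i\<in>I'. d i * y i) = (\<Sum>i\<in>I'. d i * y' i)"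
      unfolding y_def using kI' by (intro sum.cong) auto
    have yk: "c k * y k = - (\<Sum>i\<in>I'. c i * y' i)" unfolding y_def using ck(3) by simp
    have yrat: "\<forall>i\<in>I. y i \<in> \<rat>"
    proof
      fix i assume i: "i \<in> I"
      show "y i \<in> \<rat>"
      proof (cases "i = k")
        case True
        have "(\<Sum>i\<in>I'. c i * y' i) \<in> \<rat>"
          using y'(1) less.prems(3) ck(1) unfolding I'_def
          by (intro Rats_sum Rats_mult) auto
        then show ?thesis using True less.prems(3) ck unfolding y_def
          by (auto intro!: Rats_divide)
      next
        case False
        then show ?thesis using i y'(1) unfolding y_def I'_def by auto
      qed
    qed
    have yeq: "\<forall>d\<in>Eq. (\<Sum>i\<in>I. d i * y i) = 0"
    proof
      fix d assume d: "d \<in> Eq"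
      have "(\<lambda>i. d i - d k * c i / c k) \<in> Eq'" unfolding Eq'_def using d by auto
      then have "(\<Sum>i\<in>I'. (d i - d k * c i / c k) * y' i) = 0" using bspec[OF y'(2)] by fastforce
      then have h: "(\<Sum>i\<in>I'. d i * y' i) = d k / c k * (\<Sum>i\<in>I'. c i * y' i)"
        using key by simp
      have "(\<Sum>i\<in>I. d i * y i) = d k * y k + (\<Sum>i\<in>I'. d i * y' i)" using eqsplit[of d y] sumy[of d] by simp
      also have "\<dots> = d k * y k + d k / c k * (- (c k * y k))" using h yk by simp
      also have "\<dots> = 0" using ck(3) by simp
      finally show "(\<Sum>i\<in>I. d i * y i) = 0" .
    qed
    have yclose: "\<forall>i\<in>I. \<bar>x i - y i\<bar> < \<epsilon>"
    proof
      fix i assume i: "i \<in> I"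
      show "\<bar>x i - y i\<bar> < \<epsilon>"
      proof (cases "i = k")
        case False
        then have "i \<in> I'" using i unfolding I'_def by auto
        then have "\<bar>x i - y i\<bar> < \<delta>" using y'(3) False unfolding y_def by auto
        then show ?thesis unfolding \<delta>_def by auto
      next
        case True
        have "(\<Sum>i\<in>I. c i * x i) = 0" using less.prems(4) ck(1) by blast
        then have e2: "c k * x k + (\<Sum>i\<in>I'. c i * x i) = 0" using eqsplit[of c x] by simp
        have "c k * (x k - y k) = - (\<Sum>i\<in>I'. c i * (x i - y' i))"
          using e2 yk by (simp add: algebra_simps sum_subtractf)
        then have "\<bar>c k\<bar> * \<bar>x k - y k\<bar> = \<bar>\<Sum>i\<in>I'. c i * (x i - y' i)\<bar>"
        proof -
          assume h: "c k * (x k - y k) = - (\<Sum>i\<in>I'. c i * (x i - y' i))"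
          have "\<bar>c k * (x k - y k)\<bar> = \<bar>\<Sum>i\<in>I'. c i * (x i - y' i)\<bar>" unfolding h by simp
          then show ?thesis by (simp add: abs_mult)
        qed
        also have "\<dots> \<le> (\<Sum>i\<in>I'. \<bar>c i\<bar> * \<bar>x i - y' i\<bar>)"
          by (rule order_trans[OF sum_abs]) (simp add: abs_mult)
        also have "\<dots> \<le> (\<Sum>i\<in>I'. \<bar>c i\<bar> * \<delta>)"
          using y'(3) by (intro sum_mono mult_left_mono) auto
        also have "\<dots> = C * \<delta>" unfolding C_def by (simp add: sum_distrib_right)
        also have "\<dots> \<le> C * (\<epsilon> * \<bar>c k\<bar> / (1 + C))"
          using C0 unfolding \<delta>_def by (intro mult_left_mono) auto
        also have "\<dots> < \<epsilon> * \<bar>c k\<bar>"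
        proof -
          have "C * (\<epsilon> * \<bar>c k\<bar> / (1 + C)) = (\<epsilon> * \<bar>c k\<bar>) * (C / (1 + C))" by simp
          also have "\<dots> < (\<epsilon> * \<bar>c k\<bar>) * 1"
            using C0 ck(3) less.prems(5) by (intro mult_strict_left_mono) auto
          finally show ?thesis by simp
        qed
        finally have "\<bar>c k\<bar> * \<bar>x k - y k\<bar> < \<bar>c k\<bar> * \<epsilon>" by (simp add: mult.commute)
        then have "\<bar>x k - y k\<bar> < \<epsilon>" using ck(3) by (simp add: mult_less_cancel_left)
        then show ?thesis using True by simp
      qed
    qed
    show ?thesis using yrat yeq yclose by blast
  qed
qed

lemma common_denom:
  assumes "finite I" "\<forall>i\<in>I. y i \<in> \<rat>"
  shows "\<exists>D::nat. D > 0 \<and> (\<forall>i\<in>I. real D * y i \<in> \<int>)"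
  using assms
proof (induction I rule: finite_induct)
  case empty
  then show ?case by (intro exI[of _ 1]) auto
next
  case (insert a I)
  then obtain D where D: "D > 0" "\<forall>i\<in>I. real D * y i \<in> \<int>" by auto
  have "y a \<in> \<rat>" using insert.prems by auto
  then obtain p q where pq: "q > 0" "y a = of_int p / of_int q" by (auto elim: Rats_cases')
  define D' where "D' = D * nat q"
  have "real D' * y a = of_int (int D * p)" unfolding D'_def using pq by simp
  then have 1: "real D' * y a \<in> \<int>" by simp
  have 2: "real D' * y i \<in> \<int>" if "i \<in> I" for i
  proof -
    have e: "real D' * y i = (real D * y i) * of_int q" unfolding D'_def using pq by simp
    moreover have "(real D * y i) * of_int q \<in> \<int>" using Ints_mult[OF bspec[OF D(2) that] Ints_of_int[of q]] .
    ultimately show ?thesis by (simp only: e)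
  qed
  have 3: "D' > 0" unfolding D'_def using D pq by simp
  show ?case using 1 2 3 by (intro exI[of _ D']) blast
qed


lemma fmul_finv_right: "fmul g (finv g) = fone"
  using fmul_finv_cancel[of g fone] by simp

lemma fmul_finv_left: "fmul (finv g) g = fone"
  using fmul_finv_cancel2[of g fone] by simp

lemma finv_fmul: "finv (fmul a b) = fmul (finv b) (finv a)"
proof -
  have "fmul (fmul a b) (fmul (finv b) (finv a)) = fone"
    by (simp add: fmul_assoc fmul_finv_cancel fmul_finv_right)
  then have "fmul (finv (fmul a b)) (fmul (fmul a b) (fmul (finv b) (finv a))) = finv (fmul a b)"
    by simp
  then show ?thesis by (simp add: fmul_finv_cancel2)
qed

lemma finv_fone[simp]: "finv fone = fone"
  using fmul_finv_left[of fone] by simp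

lemma shift_fmul: "shift (fmul a b) y = shift a (shift b y)"
  by (simp add: shift_def finv_fmul fmul_assoc)

lemma shift_fone[simp]: "shift fone y = y"
  by (simp add: shift_def)

lemma periodic_if_finite:
  assumes "finite (range (\<lambda>a. shift a x))"
  shows "periodic x"
proof -
  define G where "G = {f. shift f x = x}"
  have coset: "(\<lambda>h. fmul a h) ` G = {k. shift k x = shift a x}" for a
  proof
    show "(\<lambda>h. fmul a h) ` G \<subseteq> {k. shift k x = shift a x}"
      unfolding G_def by (auto simp: shift_fmul)
    show "{k. shift k x = shift a x} \<subseteq> (\<lambda>h. fmul a h) ` G"
    proof
      fix k assume k: "k \<in> {k. shift k x = shift a x}"
      have "shift (fmul (finv a) k) x = shift (finv a) (shift a x)"
        using k by (simp add: shift_fmul)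
      also have "\<dots> = x" by (simp flip: shift_fmul add: fmul_finv_left)
      finally have "shift (fmul (finv a) k) x = x" .
      then show "k \<in> (\<lambda>h. fmul a h) ` G" unfolding G_def
        by (intro image_eqI[of _ _ "fmul (finv a) k"]) (auto simp: fmul_finv_cancel)
    qed
  qed
  have "(\<lambda>a. (\<lambda>h. fmul a h) ` G) ` UNIV = (\<lambda>y. {k. shift k x = y}) ` range (\<lambda>a. shift a x)"
    using coset by auto
  then show ?thesis using assms unfolding periodic_def finite_index_def G_def by simp
qed

lemma fiber_bij:
  assumes "finite A" "finite B" "\<forall>l. card {a\<in>A. la a = l} = card {b\<in>B. lb b = l}"
  shows "\<exists>f. bij_betw f A B \<and> (\<forall>a\<in>A. lb (f a) = la a)"
proof -
  have "\<forall>l. \<exists>h. bij_betw h {a\<in>A. la a = l} {b\<in>B. lb b = l}"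
    using assms by (auto intro!: finite_same_card_bij)
  then obtain F where F: "\<And>l. bij_betw (F l) {a\<in>A. la a = l} {b\<in>B. lb b = l}" by metis
  define f where "f a = F (la a) a" for a
  have lab: "\<forall>a\<in>A. lb (f a) \<in> {la a} \<and> f a \<in> B"
    using F unfolding f_def bij_betw_def by auto
  have "inj_on f A"
  proof
    fix a a' assume aa: "a \<in> A" "a' \<in> A" "f a = f a'"
    then have "la a = la a'" using lab by (metis singletonD)
    then show "a = a'" using aa F[of "la a"] unfolding f_def bij_betw_def inj_on_def by auto
  qed
  moreover have "f ` A = B"
  proof
    show "f ` A \<subseteq> B" using lab by auto
    show "B \<subseteq> f ` A"
    proof
      fix b assume b: "b \<in> B"
      then have "b \<in> F (lb b) ` {a\<in>A. la a = lb b}" using F[of "lb b"] unfolding bij_betw_def by auto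
      then obtain a where a: "a \<in> A" "la a = lb b" "b = F (lb b) a" by auto
      then have "b = f a" unfolding f_def by simp
      then show "b \<in> f ` A" using a(1) by (rule image_eqI)
    qed
  qed
  ultimately show ?thesis using lab unfolding bij_betw_def by auto
qed


lemma perm_exists:
  fixes n :: "'v::finite \<Rightarrow> nat" and mb :: "'v \<Rightarrow> 'v \<Rightarrow> nat"
  assumes rs: "\<forall>v. (\<Sum>w\<in>UNIV. mb v w) = n v" and cs: "\<forall>w. (\<Sum>v\<in>UNIV. mb v w) = n w"
  shows "\<exists>\<sigma>. bij_betw \<sigma> (SIGMA v:UNIV. {..<n v}) (SIGMA v:UNIV. {..<n v}) \<and>
    (\<forall>\<omega>\<in>(SIGMA v:UNIV. {..<n v}). mb (fst \<omega>) (fst (\<sigma> \<omega>)) > 0)"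
proof -
  define \<Omega> where "\<Omega> = (SIGMA v:UNIV. {..<n v})"
  define T where "T = (SIGMA v:UNIV. SIGMA w:UNIV. {..<mb v w})"
  have finO: "finite \<Omega>" unfolding \<Omega>_def by (intro finite_SigmaI) auto
  have finT: "finite T" unfolding T_def by (intro finite_SigmaI) auto
  have cO: "card {\<omega>\<in>\<Omega>. fst \<omega> = v} = n v" for v
  proof -
    have "{\<omega>\<in>\<Omega>. fst \<omega> = v} = Pair v ` {..<n v}" unfolding \<Omega>_def by auto
    moreover have "inj_on (Pair v) {..<n v}" by (auto simp: inj_on_def)
    ultimately show ?thesis by (simp add: card_image)
  qed
  have cT1: "card {t\<in>T. fst t = v} = n v" for v
  proof -
    have "{t\<in>T. fst t = v} = Pair v ` (SIGMA w:UNIV. {..<mb v w})" unfolding T_def by auto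
    moreover have "inj_on (Pair v) (SIGMA w:UNIV. {..<mb v w})" by (auto simp: inj_on_def)
    ultimately have "card {t\<in>T. fst t = v} = card (SIGMA w:UNIV. {..<mb v w})" by (simp add: card_image)
    also have "\<dots> = (\<Sum>w\<in>UNIV. mb v w)" by simp
    finally show ?thesis using rs by simp
  qed
  have cT2: "card {t\<in>T. fst (snd t) = w} = n w" for w
  proof -
    have "{t\<in>T. fst (snd t) = w} = (\<lambda>(v,j). (v,(w,j))) ` (SIGMA v:UNIV. {..<mb v w})"
      unfolding T_def by force
    moreover have "inj_on (\<lambda>(v,j). (v,(w,j))) (SIGMA v:UNIV. {..<mb v w})"
      by (auto simp: inj_on_def)
    ultimately have "card {t\<in>T. fst (snd t) = w} = card (SIGMA v:UNIV. {..<mb v w})" by (simp add: card_image)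
    also have "\<dots> = (\<Sum>v\<in>UNIV. mb v w)" by simp
    finally show ?thesis using cs by simp
  qed
  obtain \<alpha> where \<alpha>: "bij_betw \<alpha> T \<Omega>" "\<forall>t\<in>T. fst (\<alpha> t) = fst t"
    using fiber_bij[OF finT finO, of fst fst] cT1 cO by auto
  obtain \<beta> where \<beta>: "bij_betw \<beta> T \<Omega>" "\<forall>t\<in>T. fst (\<beta> t) = fst (snd t)"
    using fiber_bij[OF finT finO, of "\<lambda>t. fst (snd t)" fst] cT2 cO by auto
  define \<sigma> where "\<sigma> = \<beta> \<circ> inv_into T \<alpha>"
  have "bij_betw \<sigma> \<Omega> \<Omega>" unfolding \<sigma>_def
    using bij_betw_trans[OF bij_betw_inv_into[OF \<alpha>(1)] \<beta>(1)] .
  moreover have "mb (fst \<omega>) (fst (\<sigma> \<omega>)) > 0" if w: "\<omega> \<in> \<Omega>" for \<omega>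
  proof -
    define t where "t = inv_into T \<alpha> \<omega>"
    have wa: "\<omega> \<in> \<alpha> ` T" using w bij_betw_imp_surj_on[OF \<alpha>(1)] by simp
    have tT: "t \<in> T" unfolding t_def using wa by (rule inv_into_into)
    have "\<alpha> t = \<omega>" unfolding t_def using bij_betw_inv_into_right[OF \<alpha>(1) w] .
    then have "fst \<omega> = fst t" using \<alpha>(2) tT by auto
    moreover have "fst (\<sigma> \<omega>) = fst (snd t)" unfolding \<sigma>_def using \<beta>(2) tT by (simp add: t_def)
    moreover have "snd (snd t) < mb (fst t) (fst (snd t))" using tT unfolding T_def by auto
    ultimately show ?thesis by simp
  qed
  ultimately show ?thesis unfolding \<Omega>_def by blast
qed


lemma construct:
  fixes n :: "'v::finite \<Rightarrow> nat" and m :: "'b \<Rightarrow> 'v \<Rightarrow> 'v \<Rightarrow> nat"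
  assumes rs: "\<forall>b v. (\<Sum>w\<in>UNIV. m b v w) = n v" and cs: "\<forall>b w. (\<Sum>v\<in>UNIV. m b v w) = n w"
    and edges: "\<forall>b v w. m b v w > 0 \<longrightarrow> (v,w,(b,True)) \<in> E \<and> (w,v,(b,False)) \<in> E"
    and pos: "n v0 > 0"
  shows "\<exists>x\<in>graph_subshift E. periodic x \<and> x fone = v0"
proof -
  define \<Omega> where "\<Omega> = (SIGMA v:UNIV. {..<n v})"
  have "\<forall>b. \<exists>\<sigma>. bij_betw \<sigma> \<Omega> \<Omega> \<and> (\<forall>\<omega>\<in>\<Omega>. m b (fst \<omega>) (fst (\<sigma> \<omega>)) > 0)"
    unfolding \<Omega>_def using perm_exists[of "m b" n for b] rs cs by blast
  then obtain S where S0: "\<forall>b. bij_betw (S b) \<Omega> \<Omega> \<and> (\<forall>\<omega>\<in>\<Omega>. m b (fst \<omega>) (fst (S b \<omega>)) > 0)"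
    by (rule choice[THEN exE])
  then have S: "\<And>b. bij_betw (S b) \<Omega> \<Omega>" "\<And>b \<omega>. \<omega> \<in> \<Omega> \<Longrightarrow> m b (fst \<omega>) (fst (S b \<omega>)) > 0"
    by blast+
  define \<pi> where "\<pi> b \<omega> = (if \<omega> \<in> \<Omega> then S b \<omega> else \<omega>)" for b \<omega>
  have bij\<pi>: "bij (\<pi> b)" for b
  proof -
    have 1: "bij_betw (\<pi> b) \<Omega> \<Omega>" using S(1)[of b] by (rule bij_betw_cong[THEN iffD1, rotated]) (simp add: \<pi>_def)
    have 2: "bij_betw (\<pi> b) (-\<Omega>) (-\<Omega>)"
      by (rule bij_betw_cong[THEN iffD2, of _ _ id]) (auto simp: \<pi>_def)
    show ?thesis using bij_betw_combine[OF 1 2] by simp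
  qed
  define P where "P s \<omega> = (if snd s then \<pi> (fst s) \<omega> else inv (\<pi> (fst s)) \<omega>)" for s \<omega>
  have Pinv: "P (letter_inv s) (P s \<omega>) = \<omega>" for s \<omega>
    using bij\<pi>[of "fst s"] unfolding P_def letter_inv_def
    by (auto simp: bij_def inv_f_f surj_f_inv_f)
  define act where "act \<omega> w = foldl (\<lambda>\<omega> s. P s \<omega>) \<omega> w" for \<omega> w
  have act_cons_red: "act \<omega> (cons_red a w) = act (P a \<omega>) w" for \<omega> a w
  proof (cases w)
    case (Cons b w')
    then show ?thesis
      by (cases "b = letter_inv a") (auto simp: act_def Pinv)
  qed (simp add: act_def)
  have act_foldr: "act \<omega> (foldr cons_red u w) = act \<omega> (u @ w)" for \<omega> u w
    by (induction u arbitrary: \<omega>) (auto simp: act_cons_red, simp add: act_def)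
  have Pin: "P s \<omega> \<in> \<Omega>" if "\<omega> \<in> \<Omega>" for s \<omega>
  proof (cases "snd s")
    case True
    then show ?thesis using that S(1)[of "fst s"] unfolding P_def \<pi>_def
      by (auto dest: bij_betw_imp_surj_on)
  next
    case False
    define \<omega>' where "\<omega>' = inv (\<pi> (fst s)) \<omega>"
    have e: "\<pi> (fst s) \<omega>' = \<omega>" unfolding \<omega>'_def using bij\<pi> by (simp add: bij_def surj_f_inv_f)
    have "\<omega>' \<in> \<Omega>" using e that unfolding \<pi>_def by (cases "\<omega>' \<in> \<Omega>") auto
    then show ?thesis using False unfolding P_def \<omega>'_def by simp
  qed
  have act_in: "act \<omega> w \<in> \<Omega>" if "\<omega> \<in> \<Omega>" for \<omega> w
    using that by (induction w arbitrary: \<omega>) (auto simp: act_def Pin)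
  have Pedge: "(fst \<omega>, fst (P s \<omega>), s) \<in> E" if w: "\<omega> \<in> \<Omega>" for s \<omega>
  proof (cases s)
    case (Pair b t)
    show ?thesis
    proof (cases t)
      case True
      have "m b (fst \<omega>) (fst (S b \<omega>)) > 0" using S(2) w by blast
      then show ?thesis using edges Pair True w unfolding P_def \<pi>_def by auto
    next
      case False
      define \<omega>' where "\<omega>' = inv (\<pi> b) \<omega>"
      have e: "\<pi> b \<omega>' = \<omega>" unfolding \<omega>'_def using bij\<pi> by (simp add: bij_def surj_f_inv_f)
      have w': "\<omega>' \<in> \<Omega>" using e w unfolding \<pi>_def by (cases "\<omega>' \<in> \<Omega>") auto
      then have "S b \<omega>' = \<omega>" using e unfolding \<pi>_def by simp
      then have "m b (fst \<omega>') (fst \<omega>) > 0" using S(2)[OF w', of b] by simp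
      then show ?thesis using edges Pair False unfolding P_def \<omega>'_def by auto
    qed
  qed
  define X where "X \<omega> h = fst (act \<omega> (Rep_fgrp h))" for \<omega> h
  define \<omega>0 where "\<omega>0 = (v0, 0::nat)"
  have w0: "\<omega>0 \<in> \<Omega>" unfolding \<omega>0_def \<Omega>_def using pos by simp
  define x where "x = X \<omega>0"
  have xX: "x \<in> graph_subshift E"
    unfolding graph_subshift_def
  proof (intro CollectI allI)
    fix f s
    have "x (fmul f (gen s)) = fst (P s (act \<omega>0 (Rep_fgrp f)))"
      unfolding x_def X_def by (simp add: Rep_fmul act_foldr, simp add: act_def)
    moreover have "x f = fst (act \<omega>0 (Rep_fgrp f))" unfolding x_def X_def by simp
    ultimately show "(x f, x (fmul f (gen s)), s) \<in> E"
      using Pedge[OF act_in[OF w0]] by simp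
  qed
  have sh: "shift g x = X (act \<omega>0 (rmi (Rep_fgrp g)))" for g
    unfolding x_def X_def
    by (rule ext) (simp add: shift_apply Rep_fmul Rep_finv act_foldr, simp add: act_def)
  have "range (\<lambda>a. shift a x) \<subseteq> X ` \<Omega>"
    using sh act_in[OF w0] by auto
  moreover have "finite \<Omega>" unfolding \<Omega>_def by (intro finite_SigmaI) auto
  ultimately have "periodic x" by (intro periodic_if_finite) (meson finite_imageI finite_subset)
  moreover have "x fone = v0" unfolding x_def X_def \<omega>0_def by (simp add: act_def)
  ultimately show ?thesis using xX by blast
qed


lemma sum_UNIV_Plus: "(\<Sum>i\<in>(UNIV::('a::finite + 'c::finite) set). g i) = (\<Sum>a\<in>UNIV. g (Inl a)) + (\<Sum>c\<in>UNIV. g (Inr c))"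
  using sum.Plus[of "UNIV::'a set" "UNIV::'c set" g] by (simp add: comp_def)

lemma sum_slice1:
  "(\<Sum>t\<in>(UNIV::('b::finite \<times> 'v::finite \<times> 'v) set). if fst t = b \<and> fst (snd t) = v then g t else 0)
    = (\<Sum>w\<in>UNIV. g (b,v,w))"
proof -
  have "(\<Sum>t\<in>(UNIV::('b \<times> 'v \<times> 'v) set). if fst t = b \<and> fst (snd t) = v then g t else 0)
     = sum g {t. fst t = b \<and> fst (snd t) = v}"
    by (simp add: sum.inter_filter[symmetric])
  also have "{t. fst t = b \<and> fst (snd t) = v} = (\<lambda>w. (b,v,w)) ` UNIV" by auto
  also have "sum g \<dots> = (\<Sum>w\<in>UNIV. g (b,v,w))" by (subst sum.reindex) (auto simp: inj_on_def)
  finally show ?thesis .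
qed

lemma sum_slice2:
  "(\<Sum>t\<in>(UNIV::('b::finite \<times> 'v::finite \<times> 'v) set). if fst t = b \<and> snd (snd t) = w then g t else 0)
    = (\<Sum>v\<in>UNIV. g (b,v,w))"
proof -
  have "(\<Sum>t\<in>(UNIV::('b \<times> 'v \<times> 'v) set). if fst t = b \<and> snd (snd t) = w then g t else 0)
     = sum g {t. fst t = b \<and> snd (snd t) = w}"
    by (simp add: sum.inter_filter[symmetric])
  also have "{t. fst t = b \<and> snd (snd t) = w} = (\<lambda>v. (b,v,w)) ` UNIV" by auto
  also have "sum g \<dots> = (\<Sum>v\<in>UNIV. g (b,v,w))" by (subst sum.reindex) (auto simp: inj_on_def)
  finally show ?thesis .
qed

lemma sum_single: "(\<Sum>a\<in>(UNIV::'a::finite set). (if a = v then c else 0) * g a) = c * (g v :: real)"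
proof -
  have "(\<Sum>a\<in>(UNIV::'a set). (if a = v then c else 0) * g a) = (\<Sum>a\<in>(UNIV::'a set). if a = v then c * g a else 0)"
    by (rule sum.cong) auto
  also have "\<dots> = c * g v" by (rule trans[OF sum.delta]) simp_all
  finally show ?thesis .
qed

lemma sp: "space (Pi\<^sub>M UNIV (\<lambda>_::'a. count_space (UNIV::'v set))) = UNIV"
  by (simp add: space_PiM PiE_UNIV_domain)
lemma meas_set:
  fixes X :: "('b fgrp \<Rightarrow> 'v) set" and M :: "('b fgrp \<Rightarrow> 'v) measure"
  assumes "sets M = sets (restrict_space full_shift_measure X)"
  shows "{x\<in>X. x f = (v::'v)} \<in> sets M"
proof -
  have m: "(\<lambda>x. x f) \<in> measurable (Pi\<^sub>M UNIV (\<lambda>_::'b fgrp. count_space (UNIV::'v set))) (count_space UNIV)"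
    by (rule measurable_component_singleton) simp
  have "(\<lambda>x. x f) -` {v} \<inter> space (Pi\<^sub>M UNIV (\<lambda>_::'b fgrp. count_space (UNIV::'v set))) \<in> sets (Pi\<^sub>M UNIV (\<lambda>_::'b fgrp. count_space (UNIV::'v set)))"
    by (rule measurable_sets[OF m]) simp
  moreover have "(\<lambda>x. x f) -` {v} \<inter> space (Pi\<^sub>M UNIV (\<lambda>_::'b fgrp. count_space (UNIV::'v set))) = {x. x f = v}"
    unfolding sp by auto
  ultimately have "{x. x f = v} \<in> sets (full_shift_measure :: ('b fgrp \<Rightarrow> 'v) measure)"
    unfolding full_shift_measure_def by simp
  then have "X \<inter> {x. x f = v} \<in> sets (restrict_space (full_shift_measure :: ('b fgrp \<Rightarrow> 'v) measure) X)"
    unfolding sets_restrict_space by (rule imageI)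
  moreover have "X \<inter> {x. x f = v} = {x\<in>X. x f = v}" by auto
  ultimately show ?thesis using assms by simp
qed


lemma int_nat_real: "r \<in> \<int> \<Longrightarrow> r \<ge> 0 \<Longrightarrow> real (nat \<lfloor>r\<rfloor>) = r"
  by (elim Ints_cases) simp

theorem theorem5:
  fixes E :: "('v::finite \<times> 'v \<times> ('b::finite \<times> bool)) set"
    and M :: "('b fgrp \<Rightarrow> 'v) measure"
  assumes "prob_space M"
    and "sets M = sets (restrict_space full_shift_measure (graph_subshift E))"
    and "\<forall>g. \<forall>A \<in> sets M. measure M (shift g ` A) = measure M A"
  shows "(\<exists>x \<in> graph_subshift E. periodic x)
    \<and> (\<forall>v. measure M {x \<in> graph_subshift E. x fone = v} > 0
           \<longrightarrow> (\<exists>x \<in> graph_subshift E. periodic x \<and> x fone = v))"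
proof -
  interpret prob_space M by fact
  define X where "X = graph_subshift E"
  have meas: "\<And>f v. {x\<in>X. x f = (v::'v)} \<in> sets M" unfolding X_def using meas_set[OF assms(2)] .
  have spaceM: "space M = X"
    using sets_eq_imp_space_eq[OF assms(2)] unfolding X_def
    by (simp add: space_restrict_space full_shift_measure_def space_PiM PiE_UNIV_domain)
  define g where "g b = gen (b, True)" for b :: 'b
  define p where "p v = measure M {x\<in>X. x fone = v}" for v
  define Qs where "Qs b v w = {x\<in>X. x fone = v \<and> x (g b) = w}" for b v w
  define q where "q b v w = measure M (Qs b v w)" for b v w
  have Qs_meas: "Qs b v w \<in> sets M" for b v w
  proof -
    have "Qs b v w = {x\<in>X. x fone = v} \<inter> {x\<in>X. x (g b) = w}" unfolding Qs_def by auto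
    then show ?thesis using meas by auto
  qed
  have row: "(\<Sum>w\<in>UNIV. q b v w) = p v" for b v
  proof -
    have "(\<Union>w\<in>UNIV. Qs b v w) = {x\<in>X. x fone = v}" unfolding Qs_def by auto
    moreover have "measure M (\<Union>w\<in>UNIV. Qs b v w) = (\<Sum>w\<in>UNIV. measure M (Qs b v w))"
    proof (rule finite_measure_finite_Union)
      show "(\<lambda>w. Qs b v w) ` UNIV \<subseteq> events" using Qs_meas by auto
      show "disjoint_family_on (\<lambda>w. Qs b v w) UNIV" by (auto simp: disjoint_family_on_def Qs_def)
    qed simp
    ultimately show ?thesis unfolding p_def q_def by simp
  qed
  have col: "(\<Sum>v\<in>UNIV. q b v w) = p w" for b w
  proof -
    have U1: "(\<Union>v\<in>UNIV. Qs b v w) = {x\<in>X. x (g b) = w}" unfolding Qs_def by auto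
    have U2: "measure M (\<Union>v\<in>UNIV. Qs b v w) = (\<Sum>v\<in>UNIV. measure M (Qs b v w))"
    proof (rule finite_measure_finite_Union)
      show "(\<lambda>v. Qs b v w) ` UNIV \<subseteq> events" using Qs_meas by auto
      show "disjoint_family_on (\<lambda>v. Qs b v w) UNIV" by (auto simp: disjoint_family_on_def Qs_def)
    qed simp
    have SH: "shift (finv (g b)) ` {x\<in>X. x (g b) = w} = {x\<in>X. x fone = w}"
    proof
      show "shift (finv (g b)) ` {x\<in>X. x (g b) = w} \<subseteq> {x\<in>X. x fone = w}"
      proof
        fix z assume "z \<in> shift (finv (g b)) ` {x\<in>X. x (g b) = w}"
        then obtain y where y: "y \<in> X" "y (g b) = w" "z = shift (finv (g b)) y" by auto
        have "z \<in> X" using y unfolding X_def by (blast intro: shift_X)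
        moreover have "z fone = w" using y by (simp add: shift_apply)
        ultimately show "z \<in> {x\<in>X. x fone = w}" by blast
      qed
      show "{x\<in>X. x fone = w} \<subseteq> shift (finv (g b)) ` {x\<in>X. x (g b) = w}"
      proof
        fix x assume x: "x \<in> {x\<in>X. x fone = w}"
        have e: "shift (finv (g b)) (shift (g b) x) = x"
          using shift_shift_inv[of "finv (g b)" x] by simp
        have m: "shift (g b) x \<in> {x\<in>X. x (g b) = w}"
        proof -
          have "shift (g b) x \<in> X" using x unfolding X_def by (simp add: shift_X)
          moreover have "shift (g b) x (g b) = w" unfolding shift_apply fmul_finv_left using x by simp
          ultimately show ?thesis by blast
        qed
        show "x \<in> shift (finv (g b)) ` {x\<in>X. x (g b) = w}" by (rule image_eqI[where f="shift (finv (g b))", OF sym[OF e] m])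
      qed
    qed
    have "(\<Sum>v\<in>UNIV. q b v w) = measure M {x\<in>X. x (g b) = w}"
      using U2 unfolding q_def U1 by simp
    also have "\<dots> = measure M (shift (finv (g b)) ` {x\<in>X. x (g b) = w})"
      by (rule sym, intro assms(3)[rule_format] meas)
    also have "\<dots> = p w" unfolding p_def SH ..
    finally show ?thesis .
  qed
  have sum1: "(\<Sum>v\<in>UNIV. p v) = 1"
  proof -
    have XU: "(\<Union>v\<in>UNIV. {x\<in>X. x fone = v}) = X" by auto
    have U: "measure M (\<Union>v\<in>UNIV. {x\<in>X. x fone = v}) = (\<Sum>v\<in>UNIV. measure M {x\<in>X. x fone = v})"
    proof (rule finite_measure_finite_Union)
      show "(\<lambda>v. {x\<in>X. x fone = v}) ` UNIV \<subseteq> events" using meas by auto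
      show "disjoint_family_on (\<lambda>v. {x\<in>X. x fone = v}) UNIV" by (auto simp: disjoint_family_on_def)
    qed simp
    have "measure M X = (\<Sum>v\<in>UNIV. p v)" using U unfolding XU p_def .
    moreover have "measure M X = 1" using prob_space spaceM by simp
    ultimately show ?thesis by simp
  qed
  have qedge: "q b v w > 0 \<Longrightarrow> (v,w,(b,True)) \<in> E \<and> (w,v,(b,False)) \<in> E" for b v w
  proof -
    assume "q b v w > 0"
    then have "Qs b v w \<noteq> {}" unfolding q_def by auto
    then obtain y where y: "y \<in> X" "y fone = v" "y (g b) = w" unfolding Qs_def by auto
    have ax: "\<forall>f s. (y f, y (fmul f (gen s)), s) \<in> E" using y(1) unfolding X_def graph_subshift_def by simp
    have h: "fmul (g b) (gen (b,False)) = fone" unfolding g_def using gen_inv[of "(b,True)"] by (simp add: letter_inv_def)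
    have e1: "(y fone, y (g b), (b,True)) \<in> E" using ax[rule_format, of fone "(b,True)"] unfolding g_def by simp
    have e2: "(y (g b), y fone, (b,False)) \<in> E" using ax[rule_format, of "g b" "(b,False)"] unfolding h .
    show ?thesis using e1 e2 y(2,3) by simp
  qed
  have p_nonneg: "p v \<ge> 0" for v unfolding p_def by simp
  have q_nonneg: "q b v w \<ge> 0" for b v w unfolding q_def by simp
  have main: "\<exists>x\<in>X. periodic x \<and> x fone = v0" if pv0: "p v0 > 0" for v0
  proof -
    define z where "z i = (case i of Inl v \<Rightarrow> p v | Inr t \<Rightarrow> q (fst t) (fst (snd t)) (snd (snd t)))"
      for i :: "'v + 'b \<times> 'v \<times> 'v"
    define row where "row (b::'b) (v::'v) = (\<lambda>i::'v + 'b \<times> 'v \<times> 'v. case i of Inl v' \<Rightarrow> if v' = v then -1 else 0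
        | Inr t \<Rightarrow> if fst t = b \<and> fst (snd t) = v then 1 else (0::real))" for b v
    define col where "col (b::'b) (w::'v) = (\<lambda>i::'v + 'b \<times> 'v \<times> 'v. case i of Inl v' \<Rightarrow> if v' = w then -1 else 0
        | Inr t \<Rightarrow> if fst t = b \<and> snd (snd t) = w then 1 else (0::real))" for b w
    define zer where "zer i' = (\<lambda>i. if i = i' then 1 else (0::real))" for i' :: "'v + 'b \<times> 'v \<times> 'v"
    define Eq where "Eq = range (\<lambda>(b,v). row b v) \<union> range (\<lambda>(b,w). col b w) \<union> zer ` {i. z i = 0}"
    have row_eval: "(\<Sum>i\<in>UNIV. row b v i * y i) = (\<Sum>w\<in>UNIV. y (Inr (b,v,w))) - y (Inl v)" for b v y
    proof -
      have 1: "(\<Sum>a\<in>UNIV. row b v (Inl a) * y (Inl a)) = - y (Inl v)"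
      proof -
        have "(\<Sum>a\<in>UNIV. row b v (Inl a) * y (Inl a)) = (\<Sum>a\<in>UNIV. (if a = v then -1 else 0) * y (Inl a))"
          by (rule sum.cong) (auto simp: row_def)
        then show ?thesis using sum_single[of v "-1" "\<lambda>a. y (Inl a)"] by simp
      qed
      have 2: "(\<Sum>t\<in>UNIV. row b v (Inr t) * y (Inr t)) = (\<Sum>t\<in>UNIV. if fst t = b \<and> fst (snd t) = v then y (Inr t) else 0)"
        by (rule sum.cong) (auto simp: row_def)
      show ?thesis using 1 2 sum_slice1[of b v "\<lambda>t. y (Inr t)"] by (simp add: sum_UNIV_Plus)
    qed
    have col_eval: "(\<Sum>i\<in>UNIV. col b w i * y i) = (\<Sum>v\<in>UNIV. y (Inr (b,v,w))) - y (Inl w)" for b w y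
    proof -
      have 1: "(\<Sum>a\<in>UNIV. col b w (Inl a) * y (Inl a)) = - y (Inl w)"
      proof -
        have "(\<Sum>a\<in>UNIV. col b w (Inl a) * y (Inl a)) = (\<Sum>a\<in>UNIV. (if a = w then -1 else 0) * y (Inl a))"
          by (rule sum.cong) (auto simp: col_def)
        then show ?thesis using sum_single[of w "-1" "\<lambda>a. y (Inl a)"] by simp
      qed
      have 2: "(\<Sum>t\<in>UNIV. col b w (Inr t) * y (Inr t)) = (\<Sum>t\<in>UNIV. if fst t = b \<and> snd (snd t) = w then y (Inr t) else 0)"
        by (rule sum.cong) (auto simp: col_def)
      show ?thesis using 1 2 sum_slice2[of b w "\<lambda>t. y (Inr t)"] by (simp add: sum_UNIV_Plus)
    qed
    have zer_eval: "(\<Sum>i\<in>UNIV. zer i' i * y i) = y i'" for i' y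
      unfolding zer_def using sum_single[of i' 1 y] by simp
    have finU: "finite (UNIV :: ('v + 'b \<times> 'v \<times> 'v) set)" by simp
    have finEq: "finite Eq" unfolding Eq_def by simp
    have ratEq: "\<forall>c\<in>Eq. \<forall>i\<in>UNIV. c i \<in> \<rat>"
      unfolding Eq_def row_def col_def zer_def by (auto split: sum.splits)
    have zEq: "\<forall>c\<in>Eq. (\<Sum>i\<in>UNIV. c i * z i) = 0"
    proof
      fix c assume "c \<in> Eq"
      then consider (r) b v where "c = row b v" | (c) b w where "c = col b w"
        | (z) i where "c = zer i" "z i = 0" unfolding Eq_def by auto
      then show "(\<Sum>i\<in>UNIV. c i * z i) = 0"
      proof cases
        case (r b v)
        have "(\<Sum>w\<in>UNIV. z (Inr (b,v,w))) = (\<Sum>w\<in>UNIV. q b v w)" unfolding z_def by simp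
        then show ?thesis unfolding r row_eval using row[of b v] by (simp add: z_def)
      next
        case (c b w)
        have "(\<Sum>v\<in>UNIV. z (Inr (b,v,w))) = (\<Sum>v\<in>UNIV. q b v w)" unfolding z_def by simp
        then show ?thesis unfolding c col_eval using col[of b w] by (simp add: z_def)
      next
        case (z i)
        then show ?thesis using zer_eval[of i z] by simp
      qed
    qed
    define \<epsilon> where "\<epsilon> = Min (insert 1 {z i | i. z i > 0})"
    have fin\<epsilon>: "finite (insert 1 {z i | i. z i > 0})" by simp
    have \<epsilon>0: "\<epsilon> > 0" unfolding \<epsilon>_def using fin\<epsilon> by (subst Min_gr_iff) auto
    have \<epsilon>le: "z i > 0 \<Longrightarrow> \<epsilon> \<le> z i" for i unfolding \<epsilon>_def using fin\<epsilon> by (intro Min_le) auto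
    obtain y where y: "\<forall>i\<in>UNIV. y i \<in> \<rat>" "\<forall>c\<in>Eq. (\<Sum>i\<in>UNIV. c i * y i) = 0"
        "\<forall>i\<in>UNIV. \<bar>z i - y i\<bar> < \<epsilon>"
      using rat_approx[OF finU finEq ratEq zEq \<epsilon>0] by blast
    have z_nonneg: "z i \<ge> 0" for i unfolding z_def using p_nonneg q_nonneg by (auto split: sum.splits)
    have ypos: "y i > 0 \<longleftrightarrow> z i > 0" for i
    proof
      assume zi: "z i > 0"
      have "\<bar>z i - y i\<bar> < \<epsilon>" using y(3) by blast
      then show "y i > 0" using \<epsilon>le[OF zi] by (simp add: abs_less_iff)
    next
      assume yi: "y i > 0"
      show "z i > 0"
      proof (rule ccontr)
        assume "\<not> z i > 0"
        then have "z i = 0" using z_nonneg[of i] by simp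
        then have "zer i \<in> Eq" unfolding Eq_def by auto
        then have "(\<Sum>j\<in>UNIV. zer i j * y j) = 0" using y(2) by blast
        then have "y i = 0" using zer_eval[of i y] by simp
        then show False using yi by simp
      qed
    qed
    have y_nonneg: "y i \<ge> 0" for i
    proof (cases "z i > 0")
      case False
      then have "z i = 0" using z_nonneg[of i] by simp
      then have "zer i \<in> Eq" unfolding Eq_def by auto
      then have "(\<Sum>j\<in>UNIV. zer i j * y j) = 0" using y(2) by blast
      then show ?thesis using zer_eval[of i y] by simp
    qed (use ypos[of i] in simp)
    obtain D :: nat where D: "D > 0" "\<forall>i\<in>UNIV. real D * y i \<in> \<int>"
      using common_denom[OF finU y(1)] by blast
    define N where "N i = nat \<lfloor>real D * y i\<rfloor>" for i
    have NN: "real (N i) = real D * y i" for i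
      unfolding N_def using D(2) y_nonneg[of i] by (intro int_nat_real) auto
    have Npos: "N i > 0 \<longleftrightarrow> z i > 0" for i
    proof -
      have "N i > 0 \<longleftrightarrow> real (N i) > 0" by simp
      also have "\<dots> \<longleftrightarrow> y i > 0" using NN D(1) by (simp add: zero_less_mult_iff)
      finally show ?thesis using ypos by simp
    qed
    define n where "n v = N (Inl v)" for v
    define m where "m b v w = N (Inr (b,v,w))" for b v w
    have rs: "\<forall>b v. (\<Sum>w\<in>UNIV. m b v w) = n v"
    proof (intro allI)
      fix b v
      have "row b v \<in> Eq" unfolding Eq_def by auto
      then have "(\<Sum>i\<in>UNIV. row b v i * y i) = 0" using y(2) by blast
      then have "(\<Sum>w\<in>UNIV. y (Inr (b,v,w))) = y (Inl v)" using row_eval[of b v y] by simp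
      then have "real (\<Sum>w\<in>UNIV. m b v w) = real (n v)"
      proof -
        assume h: "(\<Sum>w\<in>UNIV. y (Inr (b,v,w))) = y (Inl v)"
        have "real (\<Sum>w\<in>UNIV. m b v w) = (\<Sum>w\<in>UNIV. real (m b v w))" by (rule of_nat_sum)
        also have "\<dots> = (\<Sum>w\<in>UNIV. real D * y (Inr (b,v,w)))" unfolding m_def NN ..
        also have "\<dots> = real D * (\<Sum>w\<in>UNIV. y (Inr (b,v,w)))" by (rule sum_distrib_left[symmetric])
        also have "\<dots> = real (n v)" unfolding h n_def NN ..
        finally show ?thesis .
      qed
      then show "(\<Sum>w\<in>UNIV. m b v w) = n v" by (simp only: of_nat_eq_iff)
    qed
    have cs: "\<forall>b w. (\<Sum>v\<in>UNIV. m b v w) = n w"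
    proof (intro allI)
      fix b w
      have "col b w \<in> Eq" unfolding Eq_def by auto
      then have "(\<Sum>i\<in>UNIV. col b w i * y i) = 0" using y(2) by blast
      then have "(\<Sum>v\<in>UNIV. y (Inr (b,v,w))) = y (Inl w)" using col_eval[of b w y] by simp
      then have "real (\<Sum>v\<in>UNIV. m b v w) = real (n w)"
      proof -
        assume h: "(\<Sum>v\<in>UNIV. y (Inr (b,v,w))) = y (Inl w)"
        have "real (\<Sum>v\<in>UNIV. m b v w) = (\<Sum>v\<in>UNIV. real (m b v w))" by (rule of_nat_sum)
        also have "\<dots> = (\<Sum>v\<in>UNIV. real D * y (Inr (b,v,w)))" unfolding m_def NN ..
        also have "\<dots> = real D * (\<Sum>v\<in>UNIV. y (Inr (b,v,w)))" by (rule sum_distrib_left[symmetric])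
        also have "\<dots> = real (n w)" unfolding h n_def NN ..
        finally show ?thesis .
      qed
      then show "(\<Sum>v\<in>UNIV. m b v w) = n w" by (simp only: of_nat_eq_iff)
    qed
    have edges: "\<forall>b v w. m b v w > 0 \<longrightarrow> (v,w,(b,True)) \<in> E \<and> (w,v,(b,False)) \<in> E"
    proof (intro allI impI)
      fix b v w assume "m b v w > 0"
      then have "z (Inr (b,v,w)) > 0" using Npos[of "Inr (b,v,w)"] unfolding m_def by simp
      then have "q b v w > 0" unfolding z_def by simp
      then show "(v,w,(b,True)) \<in> E \<and> (w,v,(b,False)) \<in> E" by (rule qedge)
    qed
    have "n v0 > 0" using Npos[of "Inl v0"] pv0 unfolding n_def z_def by simp
    from construct[OF rs cs edges this] show ?thesis unfolding X_def .
  qed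
  have "\<exists>v. p v > 0"
  proof (rule ccontr)
    assume "\<not> (\<exists>v. p v > 0)"
    then have "(\<Sum>v\<in>UNIV. p v) \<le> 0" by (intro sum_nonpos) (simp add: not_less)
    then show False using sum1 by simp
  qed
  then have "\<exists>x\<in>X. periodic x" using main by blast
  moreover have "\<forall>v. p v > 0 \<longrightarrow> (\<exists>x\<in>X. periodic x \<and> x fone = v)" using main by blast
  ultimately show ?thesis unfolding X_def p_def by simp
qed

end
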